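(* Let $\mathcal{M} = \langle\{\mathbf{C},\mathbf{X},Y\}, \mathbf{U}, \mathbf{f}, \mathsf{P}_{U}\rangle$ be a structural causal model with covariates $\mathbf{C}$, two treatments $\mathbf{X}=(X_i,X_j)$, and outcome $Y$, with structural equations $$X_{i} = f_{i}(\mathbf{C}) + U_{i}, \qquad X_{j}=f_{j}(\mathbf{C}, X_{i}) + U_{j}, \qquad Y = f_{Y}(\mathbf{C}, \mathbf{X}) + U_{Y},$$ where the noise vector $(U_i,U_j,U_Y)$ has distribution $\mathsf{P}_{U} = \mathcal{N}(0,\Sigma)$ for some covariance matrix $\Sigma$. Then the estimand $\mathbb{E}[Y \mid \mathrm{do}(X_{j}),\mathbf{C}]$ is identifiable from the conjunction of two data regimes: (1) the observational distribution, and (2) the joint interventional distribution on $(X_{i},X_{j})$.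
   Context: A structural causal model (SCM) consists of endogenous variables, exogenous noise variables $\mathbf{U}$ with joint distribution $\mathsf{P}_U$, and structural equations expressing each endogenous variable as a function of its parents in a causal graph and its noise term. An intervention $\mathrm{do}(X=x)$ replaces the structural equation of $X$ by the constant $x$; a joint intervention $\mathrm{do}(X_i=x_i,X_j=x_j)$ does so for both variables. The observational distribution is the joint distribution of $(\mathbf{C},\mathbf{X},Y)$ induced by the SCM; the joint interventional distribution on $(X_i,X_j)$ is the family of distributions induced under $\mathrm{do}(X_i=x_i,X_j=x_j)$ for all values $(x_i,x_j)$. An estimand is identifiable from given data regimes (within the stated model class) if any two SCMs of the class that induce the same distributions in those data regimes also yield the same value of the estimand. *)

theory Defs
  imports "HOL-Analysis.Analysis" "HOL-Probability.Probability"
begin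

text \<open>Covariance matrices of the noise vector (U_i, U_j, U_Y); index 0 = U_i,
  index 1 = U_j, index 2 = U_Y.  A (nondegenerate) covariance matrix is a
  symmetric positive definite 3x3 real matrix.\<close>

definition pos_def_cov :: "real^3^3 \<Rightarrow> bool" where
  "pos_def_cov S \<longleftrightarrow> transpose S = S \<and> (\<forall>x. x \<noteq> 0 \<longrightarrow> x \<bullet> (S *v x) > 0)"

definition gauss_density :: "real^3^3 \<Rightarrow> real^3 \<Rightarrow> real" where
  "gauss_density S u =
     exp (- (u \<bullet> (matrix_inv S *v u)) / 2) / sqrt ((2 * pi) ^ 3 * det S)"

definition mvn :: "real^3^3 \<Rightarrow> (real^3) measure" where
  "mvn S = density lborel (\<lambda>u. ennreal (gauss_density S u))"

record 'c gscm =
  CovDist :: "'c measure"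
  fI :: "'c \<Rightarrow> real"
  fJ :: "'c \<Rightarrow> real \<Rightarrow> real"
  fY :: "'c \<Rightarrow> real \<Rightarrow> real \<Rightarrow> real"
  Sig :: "real^3^3"

definition gauss_scm :: "'c measure \<Rightarrow> 'c gscm \<Rightarrow> bool" where
  "gauss_scm MC M \<longleftrightarrow>
     prob_space (CovDist M) \<and> sets (CovDist M) = sets MC \<and>
     fI M \<in> borel_measurable MC \<and>
     (\<lambda>(c, x). fJ M c x) \<in> borel_measurable (MC \<Otimes>\<^sub>M borel) \<and>
     (\<lambda>(c, x, y). fY M c x y) \<in> borel_measurable (MC \<Otimes>\<^sub>M (borel \<Otimes>\<^sub>M borel)) \<and>
     pos_def_cov (Sig M)"

definition exo :: "'c gscm \<Rightarrow> ('c \<times> (real^3)) measure" where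
  "exo M = CovDist M \<Otimes>\<^sub>M mvn (Sig M)"

text \<open>Solutions of the structural equations under optional interventions
  do(X_i = a) (di = Some a) and do(X_j = b) (dj = Some b).\<close>
definition xi_val :: "'c gscm \<Rightarrow> real option \<Rightarrow> 'c \<Rightarrow> real^3 \<Rightarrow> real" where
  "xi_val M di c u = (case di of None \<Rightarrow> fI M c + u $ 0 | Some a \<Rightarrow> a)"

definition xj_val :: "'c gscm \<Rightarrow> real option \<Rightarrow> real option \<Rightarrow> 'c \<Rightarrow> real^3 \<Rightarrow> real" where
  "xj_val M di dj c u =
     (case dj of None \<Rightarrow> fJ M c (xi_val M di c u) + u $ 1 | Some b \<Rightarrow> b)"

definition y_val :: "'c gscm \<Rightarrow> real option \<Rightarrow> real option \<Rightarrow> 'c \<Rightarrow> real^3 \<Rightarrow> real" where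
  "y_val M di dj c u = fY M c (xi_val M di c u) (xj_val M di dj c u) + u $ 2"

definition induced :: "'c gscm \<Rightarrow> real option \<Rightarrow> real option \<Rightarrow> ('c \<times> real \<times> real \<times> real) measure" where
  "induced M di dj =
     distr (exo M) (CovDist M \<Otimes>\<^sub>M (borel :: (real \<times> real \<times> real) measure))
       (\<lambda>(c, u). (c, xi_val M di c u, xj_val M di dj c u, y_val M di dj c u))"

definition obs_dist :: "'c gscm \<Rightarrow> ('c \<times> real \<times> real \<times> real) measure" where
  "obs_dist M = induced M None None"

definition joint_int_dist :: "'c gscm \<Rightarrow> real \<Rightarrow> real \<Rightarrow> ('c \<times> real \<times> real \<times> real) measure" where
  "joint_int_dist M a b = induced M (Some a) (Some b)"

text \<open>The estimand E[Y | do(X_j = x), C = c]: since C is independent of the noise,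
  this is the mean of Y over the noise under do(X_j = x) with C fixed to c.\<close>
definition estimand :: "'c gscm \<Rightarrow> real \<Rightarrow> 'c \<Rightarrow> real" where
  "estimand M x c = (\<integral>u. y_val M None (Some x) c u \<partial>mvn (Sig M))"

end

theory Submission
  imports Defs
begin

lemma pd_inv_props:
  fixes S :: "real^3^3"
  assumes "pos_def_cov S"
  shows "S ** matrix_inv S = mat 1" "\<And>u. u \<noteq> 0 \<Longrightarrow> u \<bullet> (matrix_inv S *v u) > 0"
proof -
  have sym: "transpose S = S" and pd: "\<And>x. x \<noteq> 0 \<Longrightarrow> x \<bullet> (S *v x) > 0"
    using assms unfolding pos_def_cov_def by auto
  have "inj ((*v) S)"
  proof (rule injI)
    fix x y assume "S *v x = S *v y"
    then have "S *v (x - y) = 0" by (simp add: matrix_vector_mult_diff_distrib)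
    then show "x = y" using pd[of "x - y"] by (cases "x - y = 0") auto
  qed
  then have "invertible S" using matrix_left_invertible_injective invertible_left_inverse by blast
  then have *: "S ** matrix_inv S = mat 1 \<and> matrix_inv S ** S = mat 1"
    unfolding invertible_def matrix_inv_def by (rule someI_ex)
  then show "S ** matrix_inv S = mat 1" by simp
  fix u :: "real^3" assume "u \<noteq> 0"
  define v where "v = matrix_inv S *v u"
  have uv: "u = S *v v" unfolding v_def using * by (simp add: matrix_vector_mul_assoc)
  then have "v \<noteq> 0" using \<open>u \<noteq> 0\<close> by auto
  have "u \<bullet> (matrix_inv S *v u) = (S *v v) \<bullet> v" using uv v_def by simp
  also have "\<dots> = v \<bullet> (S *v v)" by (simp add: inner_commute)
  finally show "u \<bullet> (matrix_inv S *v u) > 0" using pd[OF \<open>v \<noteq> 0\<close>] by simp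
qed


lemma quad_lower:
  fixes A :: "real^3^3"
  assumes pos: "\<And>u. u \<noteq> 0 \<Longrightarrow> u \<bullet> (A *v u) > 0"
  shows "\<exists>l>0. \<forall>u. u \<bullet> (A *v u) \<ge> l * (u \<bullet> u)"
proof -
  let ?f = "\<lambda>u::real^3. u \<bullet> (A *v u)"
  have cont: "continuous_on (sphere 0 1) ?f"
    by (intro continuous_intros)
  have ne: "sphere (0::real^3) 1 \<noteq> {}"
    by (simp add: sphere_eq_empty)
  obtain x0 where x0: "x0 \<in> sphere 0 1" and mn: "\<And>y. y \<in> sphere 0 1 \<Longrightarrow> ?f x0 \<le> ?f y"
    using continuous_attains_inf[OF compact_sphere ne cont] by blast
  have "x0 \<noteq> 0" using x0 by auto
  then have lpos: "?f x0 > 0" by (rule pos)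
  show ?thesis
  proof (intro exI[of _ "?f x0"] conjI allI lpos)
    fix u :: "real^3"
    show "?f u \<ge> ?f x0 * (u \<bullet> u)"
    proof (cases "u = 0")
      case True then show ?thesis by simp
    next
      case False
      define w where "w = (1 / norm u) *\<^sub>R u"
      have w: "w \<in> sphere 0 1" using False by (simp add: w_def)
      have uw: "u = norm u *\<^sub>R w" using False by (simp add: w_def)
      have "?f u = (norm u)^2 * ?f w"
        by (subst (1 2) uw) (simp add: matrix_vector_mult_scaleR power2_eq_square)
      moreover have "u \<bullet> u = (norm u)^2" by (simp add: power2_norm_eq_inner)
      moreover have "?f x0 * (norm u)^2 \<le> ?f w * (norm u)^2"
        using mn[OF w] by (rule mult_right_mono) simp
      ultimately show ?thesis by (simp add: mult.commute)
    qed
  qed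
qed

lemma div_le_abs_mult: "(0::real) \<le> x \<Longrightarrow> x / y \<le> \<bar>1/y\<bar> * x"
proof -
  assume "0 \<le> x"
  have "x / y = (1/y) * x" by simp
  also have "\<dots> \<le> \<bar>1/y\<bar> * x" using \<open>0 \<le> x\<close> by (intro mult_right_mono abs_ge_self)
  finally show ?thesis .
qed

lemma gauss_bound:
  fixes S :: "real^3^3"
  assumes "pos_def_cov S"
  shows "\<exists>\<sigma>>0. \<exists>K\<ge>0. \<forall>u. gauss_density S u \<le> K * (\<Prod>b\<in>Basis. normal_density 0 \<sigma> (u \<bullet> b))"
proof -
  obtain l where l: "l > 0" "\<And>u. u \<bullet> (matrix_inv S *v u) \<ge> l * (u \<bullet> u)"
    using quad_lower[OF pd_inv_props(2)[OF assms]] by blast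
  define \<sigma> where "\<sigma> = 1 / sqrt l"
  have \<sigma>: "\<sigma> > 0" using l by (simp add: \<sigma>_def)
  have s2: "2 * \<sigma>\<^sup>2 = 2 / l" using l by (simp add: \<sigma>_def power_divide)
  define c where "c = sqrt (2 * pi * \<sigma>\<^sup>2)"
  have cpos: "c > 0" using \<sigma> by (simp add: c_def)
  have nd: "normal_density 0 \<sigma> x = exp (- l * x\<^sup>2 / 2) / c" for x
    unfolding normal_density_def c_def s2 using l by (simp add: field_simps)
  define K where "K = \<bar>1 / sqrt ((2 * pi) ^ 3 * det S)\<bar> * c ^ 3"
  have K0: "K \<ge> 0" using cpos by (simp add: K_def)
  have "gauss_density S u \<le> K * (\<Prod>b\<in>Basis. normal_density 0 \<sigma> (u \<bullet> b))" for u :: "real^3"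
  proof -
    have card: "card (Basis :: (real^3) set) = 3" by simp
    have "(\<Prod>b\<in>Basis. normal_density 0 \<sigma> (u \<bullet> b)) = (\<Prod>b\<in>(Basis::(real^3) set). exp (- l * (u \<bullet> b)\<^sup>2 / 2)) / c ^ 3"
      by (simp add: nd prod_dividef card)
    also have "(\<Prod>b\<in>(Basis::(real^3) set). exp (- l * (u \<bullet> b)\<^sup>2 / 2)) = exp (\<Sum>b\<in>Basis. - l * (u \<bullet> b)\<^sup>2 / 2)"
      by (simp add: exp_sum)
    also have "(\<Sum>b\<in>(Basis::(real^3) set). - l * (u \<bullet> b)\<^sup>2 / 2) = - l * (u \<bullet> u) / 2"
      by (subst (2) euclidean_inner) (simp add: sum_divide_distrib sum_distrib_left power2_eq_square)
    finally have P: "(\<Prod>b\<in>Basis. normal_density 0 \<sigma> (u \<bullet> b)) = exp (- l * (u \<bullet> u) / 2) / c ^ 3" .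
    have "gauss_density S u \<le> \<bar>1 / sqrt ((2 * pi) ^ 3 * det S)\<bar> * exp (- (u \<bullet> (matrix_inv S *v u)) / 2)"
      unfolding gauss_density_def by (rule div_le_abs_mult) simp
    also have "\<dots> \<le> \<bar>1 / sqrt ((2 * pi) ^ 3 * det S)\<bar> * exp (- l * (u \<bullet> u) / 2)"
      using l(2)[of u] by (intro mult_left_mono) auto
    also have "\<dots> = K * (\<Prod>b\<in>Basis. normal_density 0 \<sigma> (u \<bullet> b))"
      unfolding P K_def using cpos by simp
    finally show "gauss_density S u \<le> K * (\<Prod>b\<in>Basis. normal_density 0 \<sigma> (u \<bullet> b))" .
  qed
  then show ?thesis using K0 \<sigma> by blast
qed


lemma gauss_density_meas[measurable]: "gauss_density S \<in> borel_measurable borel"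
proof -
  have eq: "gauss_density S = (\<lambda>u. exp (- (u \<bullet> (matrix_inv S *v u)) / 2) * (1 / sqrt ((2 * pi) ^ 3 * det S)))"
    unfolding gauss_density_def by (rule ext) (simp only: times_divide_eq_right mult_1_right)
  have "continuous_on UNIV (gauss_density S)"
    unfolding eq by (intro continuous_intros) auto
  then show ?thesis by (rule borel_measurable_continuous_onI)
qed

lemma sets_mvn[simp, measurable_cong]: "sets (mvn S) = sets borel"
  by (simp add: mvn_def)

lemma space_mvn[simp]: "space (mvn S) = UNIV"
  by (simp add: mvn_def)

lemma nd_fin: assumes "\<sigma> > 0" shows "(\<integral>\<^sup>+x. ennreal (normal_density 0 \<sigma> x * (1 + \<bar>x\<bar>)) \<partial>lborel) < \<infinity>"
proof -
  have "integrable lborel (\<lambda>x. normal_density 0 \<sigma> x + normal_density 0 \<sigma> x * \<bar>x - 0\<bar> ^ 1)"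
    using \<open>\<sigma> > 0\<close> by (intro Bochner_Integration.integrable_add integrable_normal_density integrable_normal_moment_abs)
  then have "integrable lborel (\<lambda>x. normal_density 0 \<sigma> x * (1 + \<bar>x\<bar>))"
    by (simp add: algebra_simps)
  then have "(\<integral>\<^sup>+x. ennreal (norm (normal_density 0 \<sigma> x * (1 + \<bar>x\<bar>))) \<partial>lborel) < \<infinity>"
    by (simp add: integrable_iff_bounded)
  then show ?thesis by (simp add: abs_mult)
qed

lemma mvn_moment_fin:
  assumes "pos_def_cov S"
  shows "(\<integral>\<^sup>+u. ennreal (gauss_density S u) * ennreal (1 + \<bar>u $ i\<bar>) \<partial>lborel) < \<infinity>"
proof -
  obtain \<sigma> K where \<sigma>: "\<sigma> > 0" and K: "K \<ge> 0"
    and bd: "\<And>u. gauss_density S u \<le> K * (\<Prod>b\<in>Basis. normal_density 0 \<sigma> (u \<bullet> b))"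
    using gauss_bound[OF assms] by blast
  define e :: "real^3" where "e = axis i 1"
  have e: "e \<in> Basis" by (simp add: e_def)
  let ?f = "\<lambda>b x. normal_density 0 \<sigma> x * (1 + \<bar>x\<bar>)"
  have le: "ennreal (gauss_density S u) * ennreal (1 + \<bar>u $ i\<bar>) \<le> ennreal K * ennreal (\<Prod>b\<in>Basis. ?f b (u \<bullet> b))" for u :: "real^3"
  proof -
    have ui: "u $ i = u \<bullet> e" by (simp add: e_def cart_eq_inner_axis)
    have p1: "(\<Prod>b\<in>Basis - {e}. (1 + \<bar>u \<bullet> b\<bar>)) \<ge> 1"
      by (intro prod_ge_1) auto
    have "(\<Prod>b\<in>(Basis::(real^3) set). (1 + \<bar>u \<bullet> b\<bar>)) = (1 + \<bar>u \<bullet> e\<bar>) * (\<Prod>b\<in>Basis - {e}. (1 + \<bar>u \<bullet> b\<bar>))"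
      using e by (simp add: prod.remove)
    also have "\<dots> \<ge> (1 + \<bar>u \<bullet> e\<bar>)" using p1 by (simp add: mult_le_cancel_left1)
    finally have pe: "1 + \<bar>u $ i\<bar> \<le> (\<Prod>b\<in>(Basis::(real^3) set). (1 + \<bar>u \<bullet> b\<bar>))" using ui by simp
    have pn: "0 \<le> (\<Prod>b\<in>(Basis::(real^3) set). normal_density 0 \<sigma> (u \<bullet> b))"
      by (intro prod_nonneg) simp
    have "max 0 (gauss_density S u) * (1 + \<bar>u $ i\<bar>) \<le> (K * (\<Prod>b\<in>Basis. normal_density 0 \<sigma> (u \<bullet> b))) * (\<Prod>b\<in>(Basis::(real^3) set). (1 + \<bar>u \<bullet> b\<bar>))"
    proof (intro mult_mono)
      show "max 0 (gauss_density S u) \<le> K * (\<Prod>b\<in>Basis. normal_density 0 \<sigma> (u \<bullet> b))"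
        using bd[of u] K pn by simp
    qed (use pe K pn in auto)
    also have "\<dots> = K * (\<Prod>b\<in>Basis. ?f b (u \<bullet> b))"
      by (simp add: prod.distrib)
    finally have "max 0 (gauss_density S u) * (1 + \<bar>u $ i\<bar>) \<le> K * (\<Prod>b\<in>Basis. ?f b (u \<bullet> b))" .
    then have "ennreal (max 0 (gauss_density S u) * (1 + \<bar>u $ i\<bar>)) \<le> ennreal (K * (\<Prod>b\<in>Basis. ?f b (u \<bullet> b)))"
      by (rule ennreal_leI)
    moreover have "ennreal (max 0 (gauss_density S u) * (1 + \<bar>u $ i\<bar>)) = ennreal (gauss_density S u) * ennreal (1 + \<bar>u $ i\<bar>)"
      by (subst ennreal_mult) (auto simp: max_def ennreal_neg)
    moreover have "ennreal (K * (\<Prod>b\<in>Basis. ?f b (u \<bullet> b))) = ennreal K * ennreal (\<Prod>b\<in>Basis. ?f b (u \<bullet> b))"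
      using K by (subst ennreal_mult) (auto intro!: prod_nonneg)
    ultimately show ?thesis by simp
  qed
  have "(\<integral>\<^sup>+u. ennreal (gauss_density S u) * ennreal (1 + \<bar>u $ i\<bar>) \<partial>lborel)
      \<le> (\<integral>\<^sup>+(u::real^3). ennreal K * ennreal (\<Prod>b\<in>Basis. ?f b (u \<bullet> b)) \<partial>lborel)"
    by (rule nn_integral_mono) (rule le)
  also have "\<dots> = ennreal K * (\<integral>\<^sup>+(u::real^3). (\<Prod>b\<in>Basis. ennreal (?f b (u \<bullet> b))) \<partial>lborel)"
    by (subst nn_integral_cmult) (auto simp: prod_ennreal)
  also have "(\<integral>\<^sup>+(u::real^3). (\<Prod>b\<in>Basis. ennreal (?f b (u \<bullet> b))) \<partial>lborel) = (\<Prod>b\<in>(Basis::(real^3) set). (\<integral>\<^sup>+x. ennreal (?f b x) \<partial>lborel))"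
    by (rule nn_integral_lborel_prod) auto
  also have "ennreal K * \<dots> < \<infinity>"
    using nd_fin[OF \<sigma>] by (simp add: ennreal_mult_less_top ennreal_prod_eq_top less_top[symmetric] ennreal_mult_eq_top_iff power_eq_top_ennreal)
  finally show ?thesis .
qed


lemma mvn_finite:
  assumes "pos_def_cov S" shows "finite_measure (mvn S)"
proof (rule finite_measureI)
  have "emeasure (mvn S) (space (mvn S)) = (\<integral>\<^sup>+u. ennreal (gauss_density S u) \<partial>lborel)"
    unfolding mvn_def by (simp add: emeasure_density)
  also have "\<dots> \<le> (\<integral>\<^sup>+u. ennreal (gauss_density S u) * ennreal (1 + \<bar>u $ 0\<bar>) \<partial>lborel)"
  proof (rule nn_integral_mono)
    fix u :: "real^3"
    have "ennreal (gauss_density S u) * 1 \<le> ennreal (gauss_density S u) * ennreal (1 + \<bar>u $ 0\<bar>)"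
      by (intro mult_left_mono) auto
    then show "ennreal (gauss_density S u) \<le> ennreal (gauss_density S u) * ennreal (1 + \<bar>u $ 0\<bar>)" by simp
  qed
  also have "\<dots> < \<infinity>" by (rule mvn_moment_fin[OF assms])
  finally show "emeasure (mvn S) (space (mvn S)) \<noteq> \<infinity>" by simp
qed

lemma mvn_integrable:
  assumes "pos_def_cov S" shows "integrable (mvn S) (\<lambda>u. u $ i)"
  unfolding integrable_iff_bounded
proof
  show "(\<lambda>u. u $ i) \<in> borel_measurable (mvn S)" by simp
  have "(\<integral>\<^sup>+u. ennreal (norm (u $ i)) \<partial>mvn S) = (\<integral>\<^sup>+u. ennreal (gauss_density S u) * ennreal \<bar>u $ i\<bar> \<partial>lborel)"
    unfolding mvn_def by (subst nn_integral_density) auto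
  also have "\<dots> \<le> (\<integral>\<^sup>+u. ennreal (gauss_density S u) * ennreal (1 + \<bar>u $ i\<bar>) \<partial>lborel)"
    by (intro nn_integral_mono mult_left_mono ennreal_leI) auto
  also have "\<dots> < \<infinity>" by (rule mvn_moment_fin[OF assms])
  finally show "(\<integral>\<^sup>+u. ennreal (norm (u $ i)) \<partial>mvn S) < \<infinity>" .
qed

lemma mvn_AE_shift:
  assumes "AE a in lborel. P a"
  shows "AE u in mvn S. P (t + u $ i)"
proof -
  obtain N where N0: "{x \<in> space lborel. \<not> P x} \<subseteq> N" "emeasure lborel N = 0" "N \<in> sets lborel"
    using AE_E[OF assms] by blast
  have N: "N \<in> null_sets lborel" "{a. \<not> P a} \<subseteq> N" using N0 by auto
  have Nm[measurable]: "N \<in> sets borel" using N0(3) by simp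
  define e :: "real^3" where "e = axis i 1"
  have e: "e \<in> Basis" by (simp add: e_def)
  let ?f = "\<lambda>b x. if b = e then indicator N (t + x) else (1::ennreal)"
  have "emeasure lborel {u::real^3. t + u $ i \<in> N} = (\<integral>\<^sup>+u. indicator N (t + u $ i) \<partial>lborel)"
  proof -
    have m: "{u::real^3. t + u $ i \<in> N} \<in> sets lborel" by measurable
    have "emeasure lborel {u::real^3. t + u $ i \<in> N} = (\<integral>\<^sup>+u. indicator {u::real^3. t + u $ i \<in> N} u \<partial>lborel)"
      using nn_integral_indicator[OF m] by simp
    also have "\<dots> = (\<integral>\<^sup>+u. indicator N (t + u $ i) \<partial>lborel)"
      by (intro nn_integral_cong) (simp add: indicator_def)
    finally show ?thesis .
  qed
  also have "\<dots> = (\<integral>\<^sup>+u. (\<Prod>b\<in>Basis. ?f b (u \<bullet> b)) \<partial>lborel)"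
  proof (rule nn_integral_cong)
    fix u :: "real^3"
    have "(\<Prod>b\<in>Basis. ?f b (u \<bullet> b)) = ?f e (u \<bullet> e) * (\<Prod>b\<in>Basis - {e}. ?f b (u \<bullet> b))"
      using e by (simp add: prod.remove)
    also have "(\<Prod>b\<in>Basis - {e}. ?f b (u \<bullet> b)) = 1" by (intro prod.neutral) auto
    finally show "indicator N (t + u $ i) = (\<Prod>b\<in>Basis. ?f b (u \<bullet> b))"
      by (simp add: e_def cart_eq_inner_axis)
  qed
  also have "\<dots> = (\<Prod>b\<in>(Basis::(real^3) set). (\<integral>\<^sup>+x. ?f b x \<partial>lborel))"
    by (rule nn_integral_lborel_prod) auto
  also have "\<dots> = 0"
  proof -
    have "(\<integral>\<^sup>+x. indicator N x \<partial>lborel) = ennreal \<bar>1::real\<bar> * (\<integral>\<^sup>+x. indicator N (t + (1::real) * x) \<partial>lborel)"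
      by (rule nn_integral_real_affine) auto
    then have "(\<integral>\<^sup>+x. ?f e x \<partial>lborel) = 0" using N0(2) by simp
    then show ?thesis using e by (intro prod_zero bexI[of _ e]) auto
  qed
  finally have "{u::real^3. t + u $ i \<in> N} \<in> null_sets lborel" by (auto simp: null_sets_def)
  then have "AE u in lborel. t + u $ i \<notin> N" by (rule AE_not_in[THEN AE_mp]) auto
  then have "AE u in lborel. P (t + u $ i)" by eventually_elim (use N(2) in auto)
  then show ?thesis unfolding mvn_def by (subst AE_density) (auto elim: AE_mp)
qed


lemma sets_borel_rat: "sets (borel :: real measure) = sigma_sets UNIV (greaterThan ` \<rat>)"
proof -
  have "sets (borel :: real measure) = sigma_sets UNIV (range greaterThan)"
    by (subst borel_Ioi) simp
  also have "\<dots> = sigma_sets UNIV (greaterThan ` \<rat>)"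
  proof (rule sigma_sets_eqI)
    fix a :: "real set" assume "a \<in> range greaterThan"
    then obtain x where x: "a = {x<..}" by auto
    have "a = \<Union> (greaterThan ` {q\<in>\<rat>. x < q})"
    proof (intro set_eqI iffI)
      fix y assume "y \<in> a"
      then have "x < y" using x by simp
      then obtain q where "q \<in> \<rat>" "x < q" "q < y" using Rats_dense_in_real by blast
      then show "y \<in> \<Union> (greaterThan ` {q\<in>\<rat>. x < q})" by auto
    qed (auto simp: x)
    also have "\<dots> \<in> sigma_sets UNIV (greaterThan ` \<rat>)"
      by (intro sigma_sets_UNION) (auto intro: countable_image countable_subset[OF _ countable_rat])
    finally show "a \<in> sigma_sets UNIV (greaterThan ` \<rat>)" .
  next
    fix b :: "real set" assume "b \<in> greaterThan ` \<rat>"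
    then show "b \<in> sigma_sets UNIV (range greaterThan)" by auto
  qed
  finally show ?thesis .
qed

lemma Int_stable_rat: "Int_stable (greaterThan ` (\<rat> :: real set))"
  unfolding Int_stable_def
proof (intro ballI)
    fix x y :: "real set" assume "x \<in> greaterThan ` \<rat>" "y \<in> greaterThan ` \<rat>"
    then obtain a b :: real where ab: "a \<in> \<rat>" "b \<in> \<rat>" "x = {a<..}" "y = {b<..}" by auto
    have "max a b \<in> \<rat>" using ab by (simp add: max_def)
    moreover have "x \<inter> y = {max a b<..}" using ab by auto
    ultimately show "x \<inter> y \<in> greaterThan ` \<rat>" by simp
qed

lemma finite_measure_real_eq_rat:
  fixes M N :: "real measure"
  assumes "sets M = sets borel" "sets N = sets borel" "finite_measure M"
    and "\<And>q. q \<in> \<rat> \<Longrightarrow> emeasure M {q<..} = emeasure N {q<..}"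
  shows "M = N"
proof (rule measure_eqI_generator_eq_countable[where E="greaterThan ` \<rat>" and A="greaterThan ` \<rat>" and \<Omega>=UNIV])
  show "Int_stable (greaterThan ` (\<rat>::real set))" by (rule Int_stable_rat)
  show "\<And>a. a \<in> greaterThan ` \<rat> \<Longrightarrow> emeasure M a \<noteq> \<infinity>"
    using finite_measure.emeasure_finite[OF assms(3)] by (simp add: top_unique)
  show "\<Union> (greaterThan ` \<rat>) = (UNIV :: real set)"
  proof (intro set_eqI iffI)
    fix y :: real
    obtain q where "q \<in> \<rat>" "y - 1 < q" "q < y" using Rats_dense_in_real[of "y - 1" y] by auto
    then show "y \<in> \<Union> (greaterThan ` \<rat>)" by auto
  qed auto
qed (use assms sets_borel_rat in \<open>auto intro: countable_rat\<close>)

lemma kernel_unique: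
  fixes C :: "'c measure" and P1 P2 :: "'u measure" and h1 h2 :: "'c \<Rightarrow> 'u \<Rightarrow> real"
  assumes C: "prob_space C" and P1: "finite_measure P1" and P2: "finite_measure P2"
    and h1[measurable]: "(\<lambda>(c, u). h1 c u) \<in> borel_measurable (C \<Otimes>\<^sub>M P1)"
    and h2[measurable]: "(\<lambda>(c, u). h2 c u) \<in> borel_measurable (C \<Otimes>\<^sub>M P2)"
    and eq: "\<And>A B. A \<in> sets C \<Longrightarrow> B \<in> sets borel \<Longrightarrow>
       (\<integral>\<^sup>+c. emeasure P1 {u \<in> space P1. h1 c u \<in> B} * indicator A c \<partial>C) =
       (\<integral>\<^sup>+c. emeasure P2 {u \<in> space P2. h2 c u \<in> B} * indicator A c \<partial>C)"
  shows "AE c in C. distr P1 borel (h1 c) = distr P2 borel (h2 c)"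
proof -
  interpret C: prob_space C by (rule C)
  interpret P1: finite_measure P1 by (rule P1)
  interpret P2: finite_measure P2 by (rule P2)
  have meas1: "(\<lambda>c. emeasure P1 {u \<in> space P1. h1 c u \<in> B}) \<in> borel_measurable C" if B: "B \<in> sets borel" for B
  proof -
    let ?Q = "{x \<in> space (C \<Otimes>\<^sub>M P1). (\<lambda>(c, u). h1 c u) x \<in> B}"
    have Q: "?Q \<in> sets (C \<Otimes>\<^sub>M P1)" using B by measurable
    have "(\<lambda>c. emeasure P1 (Pair c -` ?Q)) \<in> borel_measurable C"
      by (rule P1.measurable_emeasure_Pair[OF Q])
    moreover have "\<And>c. c \<in> space C \<Longrightarrow> Pair c -` ?Q = {u \<in> space P1. h1 c u \<in> B}"
      by (auto simp: space_pair_measure)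
    ultimately show ?thesis by (simp cong: measurable_cong)
  qed
  have meas2: "(\<lambda>c. emeasure P2 {u \<in> space P2. h2 c u \<in> B}) \<in> borel_measurable C" if B: "B \<in> sets borel" for B
  proof -
    let ?Q = "{x \<in> space (C \<Otimes>\<^sub>M P2). (\<lambda>(c, u). h2 c u) x \<in> B}"
    have Q: "?Q \<in> sets (C \<Otimes>\<^sub>M P2)" using B by measurable
    have "(\<lambda>c. emeasure P2 (Pair c -` ?Q)) \<in> borel_measurable C"
      by (rule P2.measurable_emeasure_Pair[OF Q])
    moreover have "\<And>c. c \<in> space C \<Longrightarrow> Pair c -` ?Q = {u \<in> space P2. h2 c u \<in> B}"
      by (auto simp: space_pair_measure)
    ultimately show ?thesis by (simp cong: measurable_cong)
  qed
  have AEB: "AE c in C. emeasure P1 {u \<in> space P1. h1 c u \<in> B} = emeasure P2 {u \<in> space P2. h2 c u \<in> B}"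
    if B: "B \<in> sets borel" for B
    by (rule C.density_unique2[OF meas1[OF B] meas2[OF B]]) (use eq B in auto)
  have "AE c in C. \<forall>q\<in>\<rat>. emeasure P1 {u \<in> space P1. h1 c u \<in> {q<..}} = emeasure P2 {u \<in> space P2. h2 c u \<in> {q<..}}"
  proof (subst AE_ball_countable[OF countable_rat], intro ballI)
    fix q :: real assume "q \<in> \<rat>"
    show "AE c in C. emeasure P1 {u \<in> space P1. h1 c u \<in> {q<..}} = emeasure P2 {u \<in> space P2. h2 c u \<in> {q<..}}"
      by (rule AEB) simp
  qed
  then show ?thesis
  proof (rule AE_mp, intro AE_I2 impI)
    fix c assume c: "c \<in> space C"
      assume H: "\<forall>q\<in>\<rat>. emeasure P1 {u \<in> space P1. h1 c u \<in> {q<..}} = emeasure P2 {u \<in> space P2. h2 c u \<in> {q<..}}"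
    have m1: "h1 c \<in> borel_measurable P1" using measurable_Pair2[OF h1 c] by simp
    have m2: "h2 c \<in> borel_measurable P2" using measurable_Pair2[OF h2 c] by simp
    show "distr P1 borel (h1 c) = distr P2 borel (h2 c)"
    proof (rule finite_measure_real_eq_rat)
      show "finite_measure (distr P1 borel (h1 c))" by (rule P1.finite_measure_distr[OF m1])
      fix q :: real assume "q \<in> \<rat>"
      then show "emeasure (distr P1 borel (h1 c)) {q<..} = emeasure (distr P2 borel (h2 c)) {q<..}"
        using H m1 m2 by (simp add: emeasure_distr vimage_def Int_def conj_commute)
    qed auto
  qed
qed


lemma gs_basic:
  assumes "gauss_scm MC M"
  shows "prob_space (CovDist M)" "sets (CovDist M) = sets MC" "fI M \<in> borel_measurable MC"
    "(\<lambda>(c, x). fJ M c x) \<in> borel_measurable (MC \<Otimes>\<^sub>M borel)"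
    "(\<lambda>(c, x, y). fY M c x y) \<in> borel_measurable (MC \<Otimes>\<^sub>M (borel \<Otimes>\<^sub>M borel))"
    "pos_def_cov (Sig M)"
  using assms unfolding gauss_scm_def by auto

lemma sets_exo: "gauss_scm MC M \<Longrightarrow> sets (exo M) = sets (MC \<Otimes>\<^sub>M (borel :: (real^3) measure))"
  unfolding exo_def by (intro sets_pair_measure_cong) (auto dest: gs_basic)

lemma meas_fJ:
  assumes "gauss_scm MC M" and f: "f \<in> measurable N MC" and g: "g \<in> borel_measurable N"
  shows "(\<lambda>x. fJ M (f x) (g x)) \<in> borel_measurable N"
  using measurable_compose[OF measurable_Pair[OF f g] gs_basic(4)[OF assms(1)]] by simp

lemma meas_fY:
  assumes "gauss_scm MC M" and f: "f \<in> measurable N MC" and g: "g \<in> borel_measurable N"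
    and h: "h \<in> borel_measurable N"
  shows "(\<lambda>x. fY M (f x) (g x) (h x)) \<in> borel_measurable N"
  using measurable_compose[OF measurable_Pair[OF f measurable_Pair[OF g h]] gs_basic(5)[OF assms(1)]] by simp

lemma meas_vals:
  assumes gs: "gauss_scm MC M"
  shows "(\<lambda>(c, u). xi_val M di c u) \<in> borel_measurable (MC \<Otimes>\<^sub>M (borel :: (real^3) measure))"
    and "(\<lambda>(c, u). xj_val M di dj c u) \<in> borel_measurable (MC \<Otimes>\<^sub>M (borel :: (real^3) measure))"
    and "(\<lambda>(c, u). y_val M di dj c u) \<in> borel_measurable (MC \<Otimes>\<^sub>M (borel :: (real^3) measure))"
proof -
  note fI[measurable] = gs_basic(3)[OF gs]
  have fst: "fst \<in> measurable (MC \<Otimes>\<^sub>M (borel :: (real^3) measure)) MC" by simp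
  show xi: "(\<lambda>(c, u). xi_val M di c u) \<in> borel_measurable (MC \<Otimes>\<^sub>M (borel :: (real^3) measure))"
    apply (cases di)
     apply (simp_all add: xi_val_def case_prod_beta')
    by (intro borel_measurable_add measurable_compose[OF measurable_fst fI] measurable_compose[OF measurable_snd borel_measurable_nth])
  then have xi': "(\<lambda>p. xi_val M di (fst p) (snd p)) \<in> borel_measurable (MC \<Otimes>\<^sub>M (borel :: (real^3) measure))"
    by (simp add: case_prod_beta')
  show xj: "(\<lambda>(c, u). xj_val M di dj c u) \<in> borel_measurable (MC \<Otimes>\<^sub>M (borel :: (real^3) measure))"
  proof (cases dj)
    case None
    have "(\<lambda>p. fJ M (fst p) (xi_val M di (fst p) (snd p))) \<in> borel_measurable (MC \<Otimes>\<^sub>M (borel :: (real^3) measure))"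
      by (rule meas_fJ[OF gs fst xi'])
    then have "(\<lambda>p. fJ M (fst p) (xi_val M di (fst p) (snd p)) + snd p $ 1) \<in> borel_measurable (MC \<Otimes>\<^sub>M (borel :: (real^3) measure))"
      by (intro borel_measurable_add measurable_compose[OF measurable_snd borel_measurable_nth])
    then show ?thesis using None by (simp add: xj_val_def case_prod_beta')
  qed (simp add: xj_val_def case_prod_beta')
  then have xj': "(\<lambda>p. xj_val M di dj (fst p) (snd p)) \<in> borel_measurable (MC \<Otimes>\<^sub>M (borel :: (real^3) measure))"
    by (simp add: case_prod_beta')
  have "(\<lambda>p. fY M (fst p) (xi_val M di (fst p) (snd p)) (xj_val M di dj (fst p) (snd p))) \<in> borel_measurable (MC \<Otimes>\<^sub>M (borel :: (real^3) measure))"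
    by (rule meas_fY[OF gs fst xi' xj'])
  then have "(\<lambda>p. fY M (fst p) (xi_val M di (fst p) (snd p)) (xj_val M di dj (fst p) (snd p)) + snd p $ 2) \<in> borel_measurable (MC \<Otimes>\<^sub>M (borel :: (real^3) measure))"
    by (intro borel_measurable_add measurable_compose[OF measurable_snd borel_measurable_nth])
  then show "(\<lambda>(c, u). y_val M di dj c u) \<in> borel_measurable (MC \<Otimes>\<^sub>M (borel :: (real^3) measure))"
    by (simp add: y_val_def case_prod_beta')
qed

lemma induced_rect:
  assumes gs: "gauss_scm MC M" and A: "A \<in> sets MC"
    and B0: "B0 \<in> sets borel" and B1: "B1 \<in> sets borel" and B2: "B2 \<in> sets borel"
  shows "emeasure (induced M di dj) (A \<times> B0 \<times> B1 \<times> B2) =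
    (\<integral>\<^sup>+c. emeasure (mvn (Sig M)) {u. xi_val M di c u \<in> B0 \<and> xj_val M di dj c u \<in> B1 \<and> y_val M di dj c u \<in> B2} * indicator A c \<partial>CovDist M)"
proof -
  interpret P: finite_measure "mvn (Sig M)" by (rule mvn_finite[OF gs_basic(6)[OF gs]])
  interpret C: prob_space "CovDist M" by (rule gs_basic(1)[OF gs])
  let ?F = "\<lambda>(c, u). (c, xi_val M di c u, xj_val M di dj c u, y_val M di dj c u)"
  have sC: "sets (CovDist M) = sets MC" by (rule gs_basic(2)[OF gs])
  have sE: "sets (exo M) = sets (MC \<Otimes>\<^sub>M (borel :: (real^3) measure))" by (rule sets_exo[OF gs])
  note mv = meas_vals[OF gs]
  have Fm: "?F \<in> measurable (exo M) (CovDist M \<Otimes>\<^sub>M (borel :: (real \<times> real \<times> real) measure))"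
  proof -
    have "?F \<in> measurable (MC \<Otimes>\<^sub>M (borel :: (real^3) measure)) (MC \<Otimes>\<^sub>M (borel :: (real \<times> real \<times> real) measure))"
    proof -
      have m0: "(\<lambda>p. xi_val M di (fst p) (snd p)) \<in> borel_measurable (MC \<Otimes>\<^sub>M (borel :: (real^3) measure))"
        using mv(1)[of di] by (simp add: case_prod_beta')
      have m1: "(\<lambda>p. xj_val M di dj (fst p) (snd p)) \<in> borel_measurable (MC \<Otimes>\<^sub>M (borel :: (real^3) measure))"
        using mv(2)[of di dj] by (simp add: case_prod_beta')
      have m2: "(\<lambda>p. y_val M di dj (fst p) (snd p)) \<in> borel_measurable (MC \<Otimes>\<^sub>M (borel :: (real^3) measure))"
        using mv(3)[of di dj] by (simp add: case_prod_beta')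
      have "(\<lambda>p. (fst p, xi_val M di (fst p) (snd p), xj_val M di dj (fst p) (snd p), y_val M di dj (fst p) (snd p)))
         \<in> measurable (MC \<Otimes>\<^sub>M (borel :: (real^3) measure)) (MC \<Otimes>\<^sub>M (borel :: (real \<times> real \<times> real) measure))"
        by (intro measurable_Pair measurable_fst borel_measurable_Pair m0 m1 m2)
      then show ?thesis by (simp add: case_prod_beta')
    qed
    then show ?thesis
      by (subst measurable_cong_sets[OF sE sets_pair_measure_cong[OF sC refl]])
  qed
  have X: "A \<times> B0 \<times> B1 \<times> B2 \<in> sets (CovDist M \<Otimes>\<^sub>M (borel :: (real \<times> real \<times> real) measure))"
  proof -
    have "B0 \<times> B1 \<times> B2 \<in> sets (borel \<Otimes>\<^sub>M (borel \<Otimes>\<^sub>M borel) :: (real \<times> real \<times> real) measure)"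
      using B0 B1 B2 by (intro pair_measureI) auto
    moreover have "(borel \<Otimes>\<^sub>M (borel \<Otimes>\<^sub>M borel) :: (real \<times> real \<times> real) measure) = borel"
      by (simp only: borel_prod)
    ultimately have "B0 \<times> B1 \<times> B2 \<in> sets (borel :: (real \<times> real \<times> real) measure)"
      by metis
    then show ?thesis using A sC by (intro pair_measureI) auto
  qed
  have "emeasure (induced M di dj) (A \<times> B0 \<times> B1 \<times> B2) = emeasure (exo M) (?F -` (A \<times> B0 \<times> B1 \<times> B2) \<inter> space (exo M))"
    unfolding induced_def by (rule emeasure_distr[OF Fm X])
  also have "\<dots> = (\<integral>\<^sup>+c. emeasure (mvn (Sig M)) (Pair c -` (?F -` (A \<times> B0 \<times> B1 \<times> B2) \<inter> space (exo M))) \<partial>CovDist M)"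
    unfolding exo_def
  proof (rule P.emeasure_pair_measure_alt)
    show "?F -` (A \<times> B0 \<times> B1 \<times> B2) \<inter> space (CovDist M \<Otimes>\<^sub>M mvn (Sig M)) \<in> sets (CovDist M \<Otimes>\<^sub>M mvn (Sig M))"
      using measurable_sets[OF Fm X] unfolding exo_def .
  qed
  also have "\<dots> = (\<integral>\<^sup>+c. emeasure (mvn (Sig M)) {u. xi_val M di c u \<in> B0 \<and> xj_val M di dj c u \<in> B1 \<and> y_val M di dj c u \<in> B2} * indicator A c \<partial>CovDist M)"
  proof (rule nn_integral_cong)
    fix c assume c: "c \<in> space (CovDist M)"
    show "emeasure (mvn (Sig M)) (Pair c -` (?F -` (A \<times> B0 \<times> B1 \<times> B2) \<inter> space (exo M))) =
      emeasure (mvn (Sig M)) {u. xi_val M di c u \<in> B0 \<and> xj_val M di dj c u \<in> B1 \<and> y_val M di dj c u \<in> B2} * indicator A c"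
    proof -
      have "Pair c -` (?F -` (A \<times> B0 \<times> B1 \<times> B2) \<inter> space (exo M)) =
        (if c \<in> A then {u. xi_val M di c u \<in> B0 \<and> xj_val M di dj c u \<in> B1 \<and> y_val M di dj c u \<in> B2} else {})"
        using c by (auto simp: exo_def space_pair_measure)
      then show ?thesis by (simp add: indicator_def)
    qed
  qed
  finally show ?thesis .
qed


lemma lin_comp:
  fixes P :: "'u measure" and g w :: "'u \<Rightarrow> real"
  assumes P: "finite_measure P" and w: "integrable P w" and Z: "measure P (space P) \<noteq> 0"
    and g[measurable]: "g \<in> borel_measurable P"
  shows "measure P (space P) * (\<integral>u. g u + w u \<partial>P) = (\<integral>u. measure P (space P) * g u + (\<integral>v. w v \<partial>P) \<partial>P)"
proof -
  interpret finite_measure P by (rule P)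
  let ?Z = "measure P (space P)" and ?m = "\<integral>v. w v \<partial>P"
  show ?thesis
  proof (cases "integrable P g")
    case True
    have "?Z * (\<integral>u. g u + w u \<partial>P) = ?Z * (\<integral>u. g u \<partial>P) + ?Z * ?m"
      using True w by (simp add: distrib_left)
    also have "\<dots> = (\<integral>u. ?Z * g u + ?m \<partial>P)"
      using True by simp
    finally show ?thesis .
  next
    case False
    have n1: "\<not> integrable P (\<lambda>u. g u + w u)"
    proof
      assume "integrable P (\<lambda>u. g u + w u)"
      then have "integrable P (\<lambda>u. (g u + w u) - w u)" using w by (rule Bochner_Integration.integrable_diff)
      then show False using False by simp
    qed
    have n2: "\<not> integrable P (\<lambda>u. ?Z * g u + ?m)"
    proof
      assume "integrable P (\<lambda>u. ?Z * g u + ?m)"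
      then have "integrable P (\<lambda>u. ((?Z * g u + ?m) - ?m) / ?Z)"
        by (intro integrable_divide Bochner_Integration.integrable_diff) auto
      then show False using False Z by simp
    qed
    show ?thesis using n1 n2 by (simp add: not_integrable_integral_eq)
  qed
qed

lemma null_space_AE:
  assumes "emeasure M (space M) = 0" shows "AE x in M. P x"
  by (rule AE_I[of _ _ "space M"]) (use assms in auto)


lemma obs_rect_UNIV:
  assumes gs: "gauss_scm MC M" and A: "A \<in> sets MC"
  shows "emeasure (obs_dist M) (A \<times> UNIV \<times> UNIV \<times> UNIV) = emeasure (mvn (Sig M)) (space (mvn (Sig M))) * emeasure (CovDist M) A"
proof -
  have A': "A \<in> sets (CovDist M)" using A gs_basic(2)[OF gs] by simp
  have "emeasure (obs_dist M) (A \<times> UNIV \<times> UNIV \<times> UNIV) =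
    (\<integral>\<^sup>+c. emeasure (mvn (Sig M)) (space (mvn (Sig M))) * indicator A c \<partial>CovDist M)"
    unfolding obs_dist_def by (subst induced_rect[OF gs A]) auto
  also have "\<dots> = emeasure (mvn (Sig M)) (space (mvn (Sig M))) * emeasure (CovDist M) A"
    by (rule nn_integral_cmult_indicator[OF A'])
  finally show ?thesis .
qed

lemma obs_rect_B:
  assumes gs: "gauss_scm MC M" and A: "A \<in> sets MC" and B: "B \<in> sets borel"
  shows "emeasure (obs_dist M) (A \<times> B \<times> UNIV \<times> UNIV) =
    (\<integral>\<^sup>+c. emeasure (mvn (Sig M)) {u \<in> space (mvn (Sig M)). fI M c + u $ 0 \<in> B} * indicator A c \<partial>CovDist M)"
  unfolding obs_dist_def by (subst induced_rect[OF gs A B]) (auto simp: xi_val_def)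

lemma int_rect_B:
  assumes gs: "gauss_scm MC M" and A: "A \<in> sets MC" and B: "B \<in> sets borel"
  shows "emeasure (joint_int_dist M a b) (A \<times> UNIV \<times> UNIV \<times> B) =
    (\<integral>\<^sup>+c. emeasure (mvn (Sig M)) {u \<in> space (mvn (Sig M)). fY M c a b + u $ 2 \<in> B} * indicator A c \<partial>CovDist M)"
  unfolding joint_int_dist_def by (subst induced_rect[OF gs A]) (auto simp: xi_val_def xj_val_def y_val_def B)

lemma meas_h0:
  assumes gs: "gauss_scm MC M" and sC: "sets C = sets MC" and sP: "sets P = sets (borel :: (real^3) measure)"
  shows "(\<lambda>(c, u). fI M c + u $ 0) \<in> borel_measurable (C \<Otimes>\<^sub>M P)"
proof -
  have "(\<lambda>(c, u). xi_val M None c u) \<in> borel_measurable (MC \<Otimes>\<^sub>M (borel :: (real^3) measure))"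
    by (rule meas_vals(1)[OF gs])
  then have "(\<lambda>(c, u). fI M c + u $ 0) \<in> borel_measurable (MC \<Otimes>\<^sub>M (borel :: (real^3) measure))"
    by (simp add: xi_val_def)
  then show ?thesis
    by (subst measurable_cong_sets[OF sets_pair_measure_cong[OF sC sP] refl])
qed

lemma meas_h2:
  assumes gs: "gauss_scm MC M" and sC: "sets C = sets MC" and sP: "sets P = sets (borel :: (real^3) measure)"
  shows "(\<lambda>(c, u). fY M c a b + u $ 2) \<in> borel_measurable (C \<Otimes>\<^sub>M P)"
proof -
  have "(\<lambda>(c, u). y_val M (Some a) (Some b) c u) \<in> borel_measurable (MC \<Otimes>\<^sub>M (borel :: (real^3) measure))"
    by (rule meas_vals(3)[OF gs])
  then have "(\<lambda>(c, u). fY M c a b + u $ 2) \<in> borel_measurable (MC \<Otimes>\<^sub>M (borel :: (real^3) measure))"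
    by (simp add: y_val_def xi_val_def xj_val_def)
  then show ?thesis
    by (subst measurable_cong_sets[OF sets_pair_measure_cong[OF sC sP] refl])
qed

lemma meas_fY_pair:
  assumes gs: "gauss_scm MC M" and sC: "sets C = sets MC"
  shows "(\<lambda>p. fY M (fst p) (snd p) x) \<in> borel_measurable (C \<Otimes>\<^sub>M lborel)"
proof -
  have f: "fst \<in> measurable (C \<Otimes>\<^sub>M lborel) MC"
    using measurable_fst[of C lborel] by (simp add: measurable_cong_sets[OF refl sC])
  show ?thesis by (rule meas_fY[OF gs f]) auto
qed

lemma estimand_eq:
  "estimand M x c = (\<integral>u. fY M c (fI M c + u $ 0) x + u $ 2 \<partial>mvn (Sig M))"
  by (simp add: estimand_def y_val_def xi_val_def xj_val_def)


theorem theorem1: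
  fixes MC :: "'c measure" and M1 M2 :: "'c gscm"
  assumes "gauss_scm MC M1" and "gauss_scm MC M2"
    and "obs_dist M1 = obs_dist M2"
    and "\<forall>a b. joint_int_dist M1 a b = joint_int_dist M2 a b"
  shows "\<forall>x. AE c in CovDist M1. estimand M1 x c = estimand M2 x c"
proof
  fix x :: real
  note gs1 = assms(1) and gs2 = assms(2) and obs = assms(3) and jnt = assms(4)
  define C1 where "C1 = CovDist M1"
  define C2 where "C2 = CovDist M2"
  define P1 where "P1 = mvn (Sig M1)"
  define P2 where "P2 = mvn (Sig M2)"
  interpret C1: prob_space C1 unfolding C1_def by (rule gs_basic(1)[OF gs1])
  interpret C2: prob_space C2 unfolding C2_def by (rule gs_basic(1)[OF gs2])
  interpret P1: finite_measure P1 unfolding P1_def by (rule mvn_finite[OF gs_basic(6)[OF gs1]])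
  interpret P2: finite_measure P2 unfolding P2_def by (rule mvn_finite[OF gs_basic(6)[OF gs2]])
  have sC1: "sets C1 = sets MC" unfolding C1_def by (rule gs_basic(2)[OF gs1])
  have sC2: "sets C2 = sets MC" unfolding C2_def by (rule gs_basic(2)[OF gs2])
  have spC1: "space C1 = space MC" by (rule sets_eq_imp_space_eq[OF sC1])
  have spC2: "space C2 = space MC" by (rule sets_eq_imp_space_eq[OF sC2])
  have sP1: "sets P1 = sets (borel :: (real^3) measure)" by (simp add: P1_def)
  have sP2: "sets P2 = sets (borel :: (real^3) measure)" by (simp add: P2_def)
  have spP1: "space P1 = UNIV" by (simp add: P1_def)
  have spP2: "space P2 = UNIV" by (simp add: P2_def)

  have R1: "emeasure P1 (space P1) * emeasure C1 A = emeasure P2 (space P2) * emeasure C2 A" if A: "A \<in> sets MC" for A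
    using obs_rect_UNIV[OF gs1 A] obs_rect_UNIV[OF gs2 A] obs by (simp add: P1_def P2_def C1_def C2_def)
  have ZZ: "emeasure P1 (space P1) = emeasure P2 (space P2)"
    using R1[OF sets.top[of MC]] C1.emeasure_space_1 C2.emeasure_space_1 spC1 spC2 by simp
  define Z where "Z = emeasure P1 (space P1)"
  show "AE c in CovDist M1. estimand M1 x c = estimand M2 x c"
  proof (cases "Z = 0")
    case True
    have "estimand M1 x c = 0" for c
      unfolding estimand_def
      by (rule integral_eq_zero_AE, rule null_space_AE) (use True in \<open>simp add: Z_def P1_def\<close>)
    moreover have "estimand M2 x c = 0" for c
      unfolding estimand_def
      by (rule integral_eq_zero_AE, rule null_space_AE) (use True ZZ in \<open>simp add: Z_def P2_def\<close>)
    ultimately show ?thesis by simp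
  next
    case False
    have Ztop: "Z \<noteq> \<top>" unfolding Z_def by (simp add: P1.emeasure_finite)
    have CC: "C2 = C1"
    proof (rule measure_eqI)
      show "sets C2 = sets C1" using sC1 sC2 by simp
      fix A assume "A \<in> sets C2"
      then have A: "A \<in> sets MC" using sC2 by simp
      have "Z * emeasure C1 A = Z * emeasure C2 A" using R1[OF A] ZZ by (simp add: Z_def)
      then show "emeasure C2 A = emeasure C1 A" using False Ztop by (simp add: ennreal_mult_cancel_left)
    qed
    define Zr where "Zr = measure P1 (space P1)"
    have Zr2: "Zr = measure P2 (space P2)" unfolding Zr_def measure_def using ZZ by simp
    have Zr0: "Zr \<noteq> 0" using False Ztop unfolding Zr_def Z_def measure_def
      by (simp add: enn2real_eq_0_iff)
    have K: "AE c in C1. distr P1 borel (\<lambda>u. fI M1 c + u $ 0) = distr P2 borel (\<lambda>u. fI M2 c + u $ 0)"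
    proof (rule kernel_unique)
      show "prob_space C1" "finite_measure P1" "finite_measure P2" by unfold_locales
      show "(\<lambda>(c, u). fI M1 c + u $ 0) \<in> borel_measurable (C1 \<Otimes>\<^sub>M P1)" by (rule meas_h0[OF gs1 sC1 sP1])
      show "(\<lambda>(c, u). fI M2 c + u $ 0) \<in> borel_measurable (C1 \<Otimes>\<^sub>M P2)" by (rule meas_h0[OF gs2 sC1 sP2])
      fix A B assume A: "A \<in> sets C1" and B: "B \<in> sets (borel :: real measure)"
      have A': "A \<in> sets MC" using A sC1 by simp
      show "(\<integral>\<^sup>+c. emeasure P1 {u \<in> space P1. fI M1 c + u $ 0 \<in> B} * indicator A c \<partial>C1) =
            (\<integral>\<^sup>+c. emeasure P2 {u \<in> space P2. fI M2 c + u $ 0 \<in> B} * indicator A c \<partial>C1)"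
        using obs_rect_B[OF gs1 A' B] obs_rect_B[OF gs2 A' B] obs CC
        by (simp add: P1_def P2_def C1_def C2_def)
    qed
    have L: "AE c in C1. distr P1 borel (\<lambda>u. fY M1 c a x + u $ 2) = distr P2 borel (\<lambda>u. fY M2 c a x + u $ 2)" for a
    proof (rule kernel_unique)
      show "prob_space C1" "finite_measure P1" "finite_measure P2" by unfold_locales
      show "(\<lambda>(c, u). fY M1 c a x + u $ 2) \<in> borel_measurable (C1 \<Otimes>\<^sub>M P1)" by (rule meas_h2[OF gs1 sC1 sP1])
      show "(\<lambda>(c, u). fY M2 c a x + u $ 2) \<in> borel_measurable (C1 \<Otimes>\<^sub>M P2)" by (rule meas_h2[OF gs2 sC1 sP2])
      fix A B assume A: "A \<in> sets C1" and B: "B \<in> sets (borel :: real measure)"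
      have A': "A \<in> sets MC" using A sC1 by simp
      show "(\<integral>\<^sup>+c. emeasure P1 {u \<in> space P1. fY M1 c a x + u $ 2 \<in> B} * indicator A c \<partial>C1) =
            (\<integral>\<^sup>+c. emeasure P2 {u \<in> space P2. fY M2 c a x + u $ 2 \<in> B} * indicator A c \<partial>C1)"
        using int_rect_B[OF gs1 A' B, of a x] int_rect_B[OF gs2 A' B, of a x] jnt CC
        by (simp add: P1_def P2_def C1_def C2_def)
    qed
    define m1 where "m1 = (\<integral>u. u $ 2 \<partial>P1)"
    define m2 where "m2 = (\<integral>u. u $ 2 \<partial>P2)"
    define \<phi>1 where "\<phi>1 = (\<lambda>c a. Zr * fY M1 c a x + m1)"
    define \<phi>2 where "\<phi>2 = (\<lambda>c a. Zr * fY M2 c a x + m2)"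
    have int1: "integrable P1 (\<lambda>u. u $ 2)" unfolding P1_def by (rule mvn_integrable[OF gs_basic(6)[OF gs1]])
    have int2: "integrable P2 (\<lambda>u. u $ 2)" unfolding P2_def by (rule mvn_integrable[OF gs_basic(6)[OF gs2]])
    have mean1: "(\<integral>y. y \<partial>distr P1 borel (\<lambda>u. fY M1 c a x + u $ 2)) = \<phi>1 c a" for c a
    proof -
      have m: "(\<lambda>u. fY M1 c a x + u $ 2) \<in> borel_measurable P1"
        by (simp add: measurable_cong_sets[OF sP1 refl])
      have "(\<integral>y. y \<partial>distr P1 borel (\<lambda>u. fY M1 c a x + u $ 2)) = (\<integral>u. fY M1 c a x + u $ 2 \<partial>P1)"
        by (rule integral_distr[OF m]) simp
      also have "\<dots> = (\<integral>u. fY M1 c a x \<partial>P1) + (\<integral>u. u $ 2 \<partial>P1)"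
        using int1 by (intro Bochner_Integration.integral_add) auto
      finally show ?thesis by (simp add: \<phi>1_def m1_def Zr_def)
    qed
    have mean2: "(\<integral>y. y \<partial>distr P2 borel (\<lambda>u. fY M2 c a x + u $ 2)) = \<phi>2 c a" for c a
    proof -
      have m: "(\<lambda>u. fY M2 c a x + u $ 2) \<in> borel_measurable P2"
        by (simp add: measurable_cong_sets[OF sP2 refl])
      have "(\<integral>y. y \<partial>distr P2 borel (\<lambda>u. fY M2 c a x + u $ 2)) = (\<integral>u. fY M2 c a x + u $ 2 \<partial>P2)"
        by (rule integral_distr[OF m]) simp
      also have "\<dots> = (\<integral>u. fY M2 c a x \<partial>P2) + (\<integral>u. u $ 2 \<partial>P2)"
        using int2 by (intro Bochner_Integration.integral_add) auto
      finally show ?thesis by (simp add: \<phi>2_def m2_def Zr2)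
    qed
    have AE\<phi>: "AE c in C1. \<phi>1 c a = \<phi>2 c a" for a
      using L[of a] by eventually_elim (metis mean1 mean2)
    interpret CL: pair_sigma_finite C1 "lborel :: real measure" by unfold_locales
    have mp1[measurable]: "(\<lambda>p. \<phi>1 (fst p) (snd p)) \<in> borel_measurable (C1 \<Otimes>\<^sub>M lborel)"
      unfolding \<phi>1_def using meas_fY_pair[OF gs1 sC1, of x] by measurable
    have mp2[measurable]: "(\<lambda>p. \<phi>2 (fst p) (snd p)) \<in> borel_measurable (C1 \<Otimes>\<^sub>M lborel)"
      unfolding \<phi>2_def using meas_fY_pair[OF gs2 sC1, of x] by measurable
    have Dm: "{p \<in> space (C1 \<Otimes>\<^sub>M lborel). \<phi>1 (fst p) (snd p) = \<phi>2 (fst p) (snd p)} \<in> sets (C1 \<Otimes>\<^sub>M lborel)"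
      by measurable
    have AE2: "AE c in C1. AE a in lborel. \<phi>1 c a = \<phi>2 c a"
      using AE\<phi> by (subst CL.AE_commute[OF Dm]) (rule AE_I2)
    have fin: "AE c in C1. estimand M1 x c = estimand M2 x c"
    proof (rule AE_mp[OF eventually_conj[OF K AE2]], rule AE_I2, rule impI)
      fix c assume c: "c \<in> space C1"
        and H: "distr P1 borel (\<lambda>u. fI M1 c + u $ 0) = distr P2 borel (\<lambda>u. fI M2 c + u $ 0) \<and> (AE a in lborel. \<phi>1 c a = \<phi>2 c a)"
      have cM: "c \<in> space MC" using c spC1 by simp
      have cst: "(\<lambda>_. c) \<in> measurable N MC" for N :: "'z measure" using cM by simp
      have fY1m[measurable]: "(\<lambda>a. fY M1 c a x) \<in> borel_measurable borel"
        by (rule meas_fY[OF gs1 cst]) auto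
      have fY2m[measurable]: "(\<lambda>a. fY M2 c a x) \<in> borel_measurable borel"
        by (rule meas_fY[OF gs2 cst]) auto
      have h1m: "(\<lambda>u. fI M1 c + u $ 0) \<in> borel_measurable P1"
        by (simp add: measurable_cong_sets[OF sP1 refl])
      have h2m: "(\<lambda>u. fI M2 c + u $ 0) \<in> borel_measurable P2"
        by (simp add: measurable_cong_sets[OF sP2 refl])
      have g1m: "(\<lambda>u. fY M1 c (fI M1 c + u $ 0) x) \<in> borel_measurable P1"
        using measurable_compose[OF h1m fY1m] by simp
      have g2m: "(\<lambda>u. fY M2 c (fI M2 c + u $ 0) x) \<in> borel_measurable P2"
        using measurable_compose[OF h2m fY2m] by simp
      have \<phi>1m: "\<phi>1 c \<in> borel_measurable borel" unfolding \<phi>1_def by measurable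
      have \<phi>2m: "\<phi>2 c \<in> borel_measurable borel" unfolding \<phi>2_def by measurable
      have "Zr * estimand M1 x c = (\<integral>u. Zr * fY M1 c (fI M1 c + u $ 0) x + m1 \<partial>P1)"
        unfolding estimand_eq Zr_def m1_def P1_def[symmetric]
        by (rule lin_comp[OF P1.finite_measure_axioms int1 _ g1m]) (use Zr0 in \<open>simp add: Zr_def\<close>)
      also have "\<dots> = (\<integral>u. \<phi>1 c (fI M1 c + u $ 0) \<partial>P1)" by (simp add: \<phi>1_def)
      also have "\<dots> = (\<integral>u. \<phi>2 c (fI M1 c + u $ 0) \<partial>P1)"
      proof (rule integral_cong_AE)
        show "(\<lambda>u. \<phi>1 c (fI M1 c + u $ 0)) \<in> borel_measurable P1"
          using measurable_compose[OF h1m \<phi>1m] by simp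
        show "(\<lambda>u. \<phi>2 c (fI M1 c + u $ 0)) \<in> borel_measurable P1"
          using measurable_compose[OF h1m \<phi>2m] by simp
        show "AE u in P1. \<phi>1 c (fI M1 c + u $ 0) = \<phi>2 c (fI M1 c + u $ 0)"
          unfolding P1_def using H by (intro mvn_AE_shift) simp
      qed
      also have "\<dots> = (\<integral>a. \<phi>2 c a \<partial>distr P1 borel (\<lambda>u. fI M1 c + u $ 0))"
        by (rule integral_distr[OF h1m \<phi>2m, symmetric])
      also have "\<dots> = (\<integral>a. \<phi>2 c a \<partial>distr P2 borel (\<lambda>u. fI M2 c + u $ 0))"
        using H by simp
      also have "\<dots> = (\<integral>u. \<phi>2 c (fI M2 c + u $ 0) \<partial>P2)"
        by (rule integral_distr[OF h2m \<phi>2m])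
      also have "\<dots> = (\<integral>u. Zr * fY M2 c (fI M2 c + u $ 0) x + m2 \<partial>P2)" by (simp add: \<phi>2_def)
      also have "\<dots> = Zr * estimand M2 x c"
        unfolding estimand_eq Zr2 m2_def P2_def[symmetric]
        by (rule lin_comp[OF P2.finite_measure_axioms int2 _ g2m, symmetric]) (use Zr0 Zr2 in simp)
      finally show "estimand M1 x c = estimand M2 x c" using Zr0 by simp
    qed
    then show ?thesis unfolding C1_def by this
  qed
qed

end
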